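(* Let $k\ge 1$ and $r\ge 0$ be integers. If a partition of the vertex set of $G_k$ into two sides has a biadjacency matrix of rank at most $r$ (over $\mathbb{Z}_2$), then the partition has at most $4r+1$ blocks.
   Context: $G_k$ is the following graph on vertices $v_1,\dots,v_{3^k}$ (ordered left to right along the boundary line of its drawing). It is defined by a drawing in the closed upper half-plane. The $3^k$ vertices lie on the horizontal boundary line and consecutive vertices are joined by a track along the line; vertices in odd positions are blue, in even positions yellow, and yellow vertices have no other tracks. The remaining tracks lie in levels $0,\dots,k-1$ (horizontal slabs, bottom to top). The bottom line of level $i$ carries points $p_{i,j}$, $0\le j<3^{k-i}/2$, left to right (the blue vertices for $i=0$, junctions for $i>0$), where tracks enter with vertical tangent. In level $i$, consecutive $p_{i,j},p_{i,j+1}$ are joined by a semicircle, subdivided by two junctions into three arcs when $j$ is a multiple of three (except that the single top-level semicircle joining $p_{k-1,0},p_{k-1,1}$ is not subdivided), a single track otherwise. For $i<k-1$ and each subdivided semicircle joining $p_{i,j},p_{i,j+1}$, tracks connect its two subdivision junctions to $p_{i+1,j/3}$, oriented so that each one connects $p_{i+1,j/3}$ downward by a smooth curve through the semicircle to $p_{i,j}$ and $p_{i,j+1}$. At every junction all incident tracks share a tangent. Two vertices of $G_k$ are adjacent iff some smooth curve contained in the union of the tracks (passing through junctions smoothly) connects them. (In particular each yellow vertex is adjacent exactly to its two neighbors in the order.) The biadjacency matrix of a partition $(A,B)$ of the vertices is the $0/1$ matrix over $\mathbb{Z}_2$ with rows indexed by $A$, columns by $B$, entry $1$ iff the two vertices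 are adjacent. A block of a partition of the vertices of $G_k$ into two sides is a maximal contiguous subsequence of $v_1,\dots,v_{3^k}$ all of whose vertices belong to the same side. *)

theory Defs
  imports "Jordan_Normal_Form.DL_Rank" "HOL-Library.Z2"
begin

(* Vertices of G_k are the positions 1..3^k (v_p is vertex p).
   Odd positions are blue, even yellow.  The blue vertex at position 2a+1 is p_{0,a}.

   desc i j = set of indices a of blue vertices p_{0,a} reachable from the point p_{i,j}
   by a smooth curve leaving p_{i,j} downward (equivalently, arriving at p_{i,j} from
   below).  Leaving p_{i+1,j} downward one takes one of the two tracks to the
   subdivided semicircle joining p_{i,3j}, p_{i,3j+1} and arrives at p_{i,3j} resp.
   p_{i,3j+1} from above, whence one must continue downward. *)
fun desc :: "nat \<Rightarrow> nat \<Rightarrow> nat set" where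
  "desc 0 j = {j}"
| "desc (Suc i) j = desc i (3 * j) \<union> desc i (3 * j + 1)"

definition pt_exists :: "nat \<Rightarrow> nat \<Rightarrow> nat \<Rightarrow> bool" where
  "pt_exists k i j \<longleftrightarrow> i < k \<and> 2 * j < 3 ^ (k - i)"

(* two blue vertices (by blue index) are joined by a smooth curve iff the curve climbs
   from one to some p_{i,j}, crosses the semicircle of level i joining p_{i,j}, p_{i,j+1},
   and descends to the other *)
definition blue_adj :: "nat \<Rightarrow> nat \<Rightarrow> nat \<Rightarrow> bool" where
  "blue_adj k a b \<longleftrightarrow>
     (\<exists>i j. pt_exists k i j \<and> pt_exists k i (j + 1) \<and>
        ((a \<in> desc i j \<and> b \<in> desc i (j + 1)) \<or> (b \<in> desc i j \<and> a \<in> desc i (j + 1))))"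

definition G_verts :: "nat \<Rightarrow> nat set" where
  "G_verts k = {1..3 ^ k}"

definition G_adj :: "nat \<Rightarrow> nat \<Rightarrow> nat \<Rightarrow> bool" where
  "G_adj k p q \<longleftrightarrow> p \<in> G_verts k \<and> q \<in> G_verts k \<and>
     (p = q + 1 \<or> q = p + 1 \<or>
      (odd p \<and> odd q \<and> blue_adj k ((p - 1) div 2) ((q - 1) div 2)))"

definition biadj :: "nat \<Rightarrow> nat set \<Rightarrow> bit mat" where
  "biadj k S = (let R = sorted_list_of_set S; C = sorted_list_of_set (G_verts k - S) in
     mat (length R) (length C) (\<lambda>(i, j). if G_adj k (R ! i) (C ! j) then 1 else 0))"

definition biadj_rank :: "nat \<Rightarrow> nat set \<Rightarrow> nat" where
  "biadj_rank k S = vec_space.rank (card S) (biadj k S)"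

definition same_side_interval :: "nat \<Rightarrow> nat set \<Rightarrow> nat \<Rightarrow> nat \<Rightarrow> bool" where
  "same_side_interval k S l u \<longleftrightarrow> 1 \<le> l \<and> l \<le> u \<and> u \<le> 3 ^ k \<and>
     ({l..u} \<subseteq> S \<or> {l..u} \<inter> S = {})"

definition blocks :: "nat \<Rightarrow> nat set \<Rightarrow> nat set set" where
  "blocks k S = {{l..u} | l u. same_side_interval k S l u \<and>
     (\<forall>l' u'. same_side_interval k S l' u' \<and> {l..u} \<subseteq> {l'..u'} \<longrightarrow> {l'..u'} = {l..u})}"

end

theory Submission
  imports Defs
begin

lemma rank_lb:
  fixes M :: "'a::field mat" and f g :: "'b \<Rightarrow> nat"
  assumes M: "M \<in> carrier_mat nr nc" and finY: "finite Y"
    and f: "\<forall>e\<in>Y. f e < nr" and g: "\<forall>e\<in>Y. g e < nc"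
    and diag: "\<forall>e\<in>Y. M $$ (f e, g e) = 1"
    and off: "\<forall>e\<in>Y. \<forall>e'\<in>Y. e \<noteq> e' \<and> (P e \<or> \<not> P e') \<longrightarrow> M $$ (f e, g e') = 0"
  shows "card Y \<le> vec_space.rank nr M"
proof -
  interpret vec_space "TYPE('a)" nr .
  define U where "U = (\<lambda>e. col M (g e)) ` Y"
  have colent: "col M (g e') $ f e = M $$ (f e, g e')" if "e \<in> Y" "e' \<in> Y" for e e'
    using M f g that by auto
  have inj: "inj_on (\<lambda>e. col M (g e)) Y"
  proof (rule inj_onI)
    fix e e' assume ee: "e \<in> Y" "e' \<in> Y" "col M (g e) = col M (g e')"
    show "e = e'"
    proof (rule ccontr)
      assume ne: "e \<noteq> e'"
      show False
      proof (cases "P e \<or> \<not> P e'")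
        case True
        then have "M $$ (f e, g e') = 0" using off ee ne by auto
        moreover have "M $$ (f e, g e) = 1" using diag ee by auto
        ultimately show False using colent[of e e] colent[of e e'] ee by simp
      next
        case False
        then have "M $$ (f e', g e) = 0" using off ee ne by auto
        moreover have "M $$ (f e', g e') = 1" using diag ee by auto
        ultimately show False using colent[of e' e] colent[of e' e'] ee by simp
      qed
    qed
  qed
  have cardU: "card U = card Y" unfolding U_def using card_image[OF inj] .
  have Usub: "U \<subseteq> set (cols M)"
  proof
    fix u assume "u \<in> U"
    then obtain e where e: "e \<in> Y" "u = col M (g e)" unfolding U_def by auto
    have "g e < dim_col M" using g e M by auto
    then show "u \<in> set (cols M)" using e by (metis cols_length cols_nth nth_mem)
  qed
  have Ucar: "U \<subseteq> carrier_vec nr" using Usub M by (auto simp: cols_def)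
  have finU: "finite U" unfolding U_def using finY by (rule finite_imageI)
  have indep: "lin_indpt U"
  proof
    assume ld: "lin_dep U"
    from finite_lin_dep[OF finU ld] Ucar obtain a v where
      av: "lincomb a U = 0\<^sub>v nr" "v \<in> U" "a v \<noteq> 0" by auto
    define c where "c e = a (col M (g e))" for e
    have rowsum: "(\<Sum>e'\<in>Y. c e' * M $$ (f e, g e')) = 0" if e: "e \<in> Y" for e
    proof -
      have "0 = lincomb a U $ f e" using av f e by simp
      also have "\<dots> = (\<Sum>x\<in>U. a x * x $ f e)" using lincomb_index[OF _ Ucar] f e by simp
      also have "\<dots> = (\<Sum>e'\<in>Y. a (col M (g e')) * col M (g e') $ f e)"
        unfolding U_def by (rule sum.reindex[OF inj, unfolded comp_def])
      also have "\<dots> = (\<Sum>e'\<in>Y. c e' * M $$ (f e, g e'))"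
        using colent e by (auto simp: c_def intro!: sum.cong)
      finally show ?thesis by simp
    qed
    have single: "(\<Sum>e'\<in>Y. c e' * M $$ (f e, g e')) = c e"
      if e: "e \<in> Y" and z: "\<forall>e'\<in>Y. e' \<noteq> e \<longrightarrow> c e' * M $$ (f e, g e') = 0" for e
    proof -
      have "(\<Sum>e'\<in>Y. c e' * M $$ (f e, g e')) = c e * M $$ (f e, g e)"
        using z e finY by (simp add: sum.remove[OF finY e] sum.neutral)
      then show ?thesis using diag e by simp
    qed
    have cP: "c e = 0" if "e \<in> Y" "P e" for e
      using rowsum[of e] single[of e] off that by auto
    have cN: "c e = 0" if "e \<in> Y" for e
    proof (cases "P e")
      case True then show ?thesis using cP that by auto
    next
      case False
      have "\<forall>e'\<in>Y. e' \<noteq> e \<longrightarrow> c e' * M $$ (f e, g e') = 0"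
        using off cP that False by (metis mult_zero_left mult_zero_right)
      then show ?thesis using rowsum[OF that] single[OF that] by simp
    qed
    from av(2) obtain e where "e \<in> Y" "v = col M (g e)" unfolding U_def by auto
    then show False using av(3) cN c_def by auto
  qed
  have "card U \<le> rank M" by (rule rank_ge_card_indpt[OF M Usub indep])
  then show ?thesis using cardU by simp
qed


lemma sep_subset:
  fixes X :: "nat set"
  assumes "d \<ge> 1"
  shows "X \<subseteq> {..<n} \<Longrightarrow> \<exists>Y\<subseteq>X. (\<forall>x\<in>Y. \<forall>y\<in>Y. x < y \<longrightarrow> x + d \<le> y) \<and> card X \<le> d * card Y"
proof (induction n arbitrary: X)
  case 0
  then show ?case by auto
next
  case (Suc n)
  show ?case
  proof (cases "n \<in> X")
    case False
    then have "X \<subseteq> {..<n}" using Suc.prems by (metis lessThan_Suc subset_insert)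
    from Suc.IH[OF this] show ?thesis by blast
  next
    case True
    define X' where "X' = {x\<in>X. x + d \<le> n}"
    have "X' \<subseteq> {..<n}"
    proof
      fix x assume "x \<in> X'"
      then have "x + d \<le> n" unfolding X'_def by simp
      then show "x \<in> {..<n}" using assms by simp
    qed
    from Suc.IH[OF this] obtain Y' where Y': "Y' \<subseteq> X'" "\<forall>x\<in>Y'. \<forall>y\<in>Y'. x < y \<longrightarrow> x + d \<le> y" "card X' \<le> d * card Y'"
      by blast
    define Y where "Y = insert n Y'"
    have fX': "finite X'" using \<open>X' \<subseteq> {..<n}\<close> finite_subset by blast
    have nY': "n \<notin> Y'" using Y'(1) X'_def assms by auto
    have fY': "finite Y'" using Y'(1) fX' finite_subset by blast
    have "X \<subseteq> X' \<union> {n+1-d..<n+1}"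
    proof
      fix x assume "x \<in> X"
      then have "x < Suc n" using Suc.prems by auto
      then show "x \<in> X' \<union> {n+1-d..<n+1}" using \<open>x \<in> X\<close> unfolding X'_def by auto
    qed
    then have "card X \<le> card (X' \<union> {n+1-d..<n+1})" by (intro card_mono) (use fX' in auto)
    also have "\<dots> \<le> card X' + card {n+1-d..<n+1}" by (rule card_Un_le)
    also have "\<dots> \<le> card X' + d" by simp
    also have "\<dots> \<le> d * card Y" unfolding Y_def using Y'(3) nY' fY' by simp
    finally have c: "card X \<le> d * card Y" .
    have s: "\<forall>x\<in>Y. \<forall>y\<in>Y. x < y \<longrightarrow> x + d \<le> y"
      unfolding Y_def using Y'(1,2) unfolding X'_def by auto
    have "Y \<subseteq> X" unfolding Y_def using Y'(1) True X'_def by auto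
    then show ?thesis using s c by blast
  qed
qed

lemma blocks_card:
  assumes "S \<subseteq> G_verts k"
  shows "card (blocks k S) \<le> Suc (card {l. 2 \<le> l \<and> l \<le> 3^k \<and> (l \<in> S) \<noteq> (l - 1 \<in> S)})"
proof -
  let ?X = "{l. 2 \<le> l \<and> l \<le> 3^k \<and> (l \<in> S) \<noteq> (l - 1 \<in> S)}"
  have bl: "\<exists>l u. B = {l..u} \<and> same_side_interval k S l u \<and>
     (\<forall>l' u'. same_side_interval k S l' u' \<and> {l..u} \<subseteq> {l'..u'} \<longrightarrow> {l'..u'} = {l..u})"
    if "B \<in> blocks k S" for B using that unfolding blocks_def by blast
  have minB: "Min B = l" if "B = {l..u}" "same_side_interval k S l u" for B l u
  proof -
    have "l \<le> u" using that(2) unfolding same_side_interval_def by simp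
    then show ?thesis using that(1) by (intro Min_eqI) auto
  qed
  have inj: "inj_on Min (blocks k S)"
  proof (rule inj_onI)
    fix B B' assume BB: "B \<in> blocks k S" "B' \<in> blocks k S" "Min B = Min B'"
    obtain l u where lu: "B = {l..u}" "same_side_interval k S l u"
      "\<forall>l' u'. same_side_interval k S l' u' \<and> {l..u} \<subseteq> {l'..u'} \<longrightarrow> {l'..u'} = {l..u}"
      using bl[OF BB(1)] by blast
    obtain l2 u2 where lu2: "B' = {l2..u2}" "same_side_interval k S l2 u2"
      "\<forall>l' u'. same_side_interval k S l' u' \<and> {l2..u2} \<subseteq> {l'..u'} \<longrightarrow> {l'..u'} = {l2..u2}"
      using bl[OF BB(2)] by blast
    have "l = l2" using minB[OF lu(1,2)] minB[OF lu2(1,2)] BB(3) by simp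
    show "B = B'"
    proof (cases "u \<le> u2")
      case True
      then show ?thesis using lu(3)[rule_format, of l2 u2] lu2(2) \<open>l = l2\<close> lu(1) lu2(1) by auto
    next
      case False
      then show ?thesis using lu2(3)[rule_format, of l u] lu(2) \<open>l = l2\<close> lu(1) lu2(1) by auto
    qed
  qed
  have sub: "Min ` blocks k S \<subseteq> insert 1 ?X"
  proof
    fix m assume "m \<in> Min ` blocks k S"
    then obtain B where B: "B \<in> blocks k S" "m = Min B" by auto
    obtain l u where lu: "B = {l..u}" "same_side_interval k S l u"
      "\<forall>l' u'. same_side_interval k S l' u' \<and> {l..u} \<subseteq> {l'..u'} \<longrightarrow> {l'..u'} = {l..u}"
      using bl[OF B(1)] by blast
    have ml: "m = l" using minB[OF lu(1,2)] B(2) by simp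
    have l1: "1 \<le> l" "l \<le> u" "u \<le> 3^k" using lu(2) unfolding same_side_interval_def by auto
    show "m \<in> insert 1 ?X"
    proof (cases "l = 1")
      case True then show ?thesis using ml by simp
    next
      case False
      have "(l \<in> S) \<noteq> (l - 1 \<in> S)"
      proof
        assume eq: "(l \<in> S) = (l - 1 \<in> S)"
        have "{l - 1..u} = {l} \<union> {l..u} \<union> {l-1}" using l1 False by auto
        have "{l - 1..u} = insert (l - 1) {l..u}" using l1 False by auto
        have lin: "l \<in> {l..u}" using l1 by simp
        have "{l..u} \<subseteq> S \<or> {l..u} \<inter> S = {}" using lu(2) unfolding same_side_interval_def by simp
        then have "insert (l - 1) {l..u} \<subseteq> S \<or> insert (l - 1) {l..u} \<inter> S = {}"
          using eq lin by blast
        then have "same_side_interval k S (l - 1) u"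
          using \<open>{l - 1..u} = insert (l - 1) {l..u}\<close> l1 False unfolding same_side_interval_def by auto
        moreover have "{l..u} \<subseteq> {l - 1..u}" by auto
        ultimately have "{l - 1..u} = {l..u}" using lu(3) by blast
        moreover have "l - 1 \<in> {l - 1..u}" using l1 by simp
        ultimately show False using l1 by simp
      qed
      then show ?thesis using ml l1 False by auto
    qed
  qed
  have finX: "finite ?X" by (rule finite_subset[of _ "{..3^k}"]) auto
  have "card (blocks k S) = card (Min ` blocks k S)" using card_image[OF inj] by simp
  also have "\<dots> \<le> card (insert 1 ?X)" using sub finX by (intro card_mono) auto
  also have "\<dots> \<le> Suc (card ?X)" by (rule card_insert_le_m1) (use finX in auto)
  finally show ?thesis .
qed


definition idx :: "nat list \<Rightarrow> nat \<Rightarrow> nat" where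
  "idx xs x = (SOME i. i < length xs \<and> xs ! i = x)"

lemma idx: "x \<in> set xs \<Longrightarrow> idx xs x < length xs \<and> xs ! idx xs x = x"
  unfolding idx_def by (rule someI_ex) (simp add: in_set_conv_nth)

theorem lemma12:
  fixes k r :: nat and S :: "nat set"
  assumes "k \<ge> 1"
    and "S \<subseteq> G_verts k"
    and "biadj_rank k S \<le> r"
  shows "card (blocks k S) \<le> 4 * r + 1"
proof -
  define X where "X = {l. 2 \<le> l \<and> l \<le> 3^k \<and> (l \<in> S) \<noteq> (l - 1 \<in> S)}"
  have finX: "finite X" unfolding X_def by (rule finite_subset[of _ "{..3^k}"]) auto
  then obtain n where "X \<subseteq> {..<n}" using finite_nat_bounded by blast
  from sep_subset[of 3 X n, OF _ this] obtain Y where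
    Y: "Y \<subseteq> X" "\<forall>x\<in>Y. \<forall>y\<in>Y. x < y \<longrightarrow> x + 3 \<le> y" "card X \<le> 3 * card Y" by auto
  have finY: "finite Y" using Y(1) finX finite_subset by blast
  define R where "R = sorted_list_of_set S"
  define C where "C = sorted_list_of_set (G_verts k - S)"
  have finS: "finite S" using assms(2) finite_subset unfolding G_verts_def by blast
  have finC: "finite (G_verts k - S)" unfolding G_verts_def by simp
  have setR: "set R = S" unfolding R_def using finS by simp
  have setC: "set C = G_verts k - S" unfolding C_def using finC by simp
  have lenR: "length R = card S" unfolding R_def by simp
  define M where "M = biadj k S"
  have Mdef: "M = mat (length R) (length C) (\<lambda>(i, j). if G_adj k (R ! i) (C ! j) then 1 else 0)"
    unfolding M_def biadj_def R_def C_def Let_def by simp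
  have Mcar: "M \<in> carrier_mat (card S) (length C)" unfolding Mdef lenR by simp
  define a where "a l = (if l \<in> S then l else l - 1)" for l :: nat
  define b where "b l = (if l \<in> S then l - 1 else l)" for l :: nat
  define f where "f l = idx R (a l)" for l
  define g where "g l = idx C (b l)" for l
  have Xprop: "2 \<le> l \<and> l \<le> 3^k \<and> (l \<in> S) \<noteq> (l - 1 \<in> S)" if "l \<in> Y" for l
    using that Y(1) unfolding X_def by auto
  have aS: "a l \<in> S" if "l \<in> Y" for l using Xprop[OF that] unfolding a_def by auto
  have bC: "b l \<in> G_verts k - S" if "l \<in> Y" for l
    using Xprop[OF that] unfolding b_def G_verts_def by auto
  have fR: "f l < length R \<and> R ! f l = a l" if "l \<in> Y" for l
    unfolding f_def using idx[of "a l" R] aS[OF that] setR by auto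
  have gC: "g l < length C \<and> C ! g l = b l" if "l \<in> Y" for l
    unfolding g_def using idx[of "b l" C] bC[OF that] setC by auto
  have Ment: "M $$ (f l, g l') = (if G_adj k (a l) (b l') then 1 else 0)" if "l \<in> Y" "l' \<in> Y" for l l'
    using fR[OF that(1)] gC[OF that(2)] unfolding Mdef by simp
  have aS': "a l \<in> G_verts k" if "l \<in> Y" for l using aS[OF that] assms(2) by auto
  have diag: "\<forall>l\<in>Y. M $$ (f l, g l) = 1"
  proof
    fix l assume l: "l \<in> Y"
    have "G_adj k (a l) (b l)" using aS'[OF l] bC[OF l] Xprop[OF l] unfolding G_adj_def a_def b_def
      by auto
    then show "M $$ (f l, g l) = 1" using Ment[OF l l] by simp
  qed
  have off: "\<forall>l\<in>Y. \<forall>l'\<in>Y. l \<noteq> l' \<and> (even (a l) \<or> \<not> even (a l')) \<longrightarrow> M $$ (f l, g l') = 0"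
  proof (intro ballI impI)
    fix l l' assume l: "l \<in> Y" and l': "l' \<in> Y" and c: "l \<noteq> l' \<and> (even (a l) \<or> \<not> even (a l'))"
    have far: "l + 3 \<le> l' \<or> l' + 3 \<le> l" using Y(2) l l' c by (metis linorder_neqE_nat)
    have al: "a l = l \<or> a l = l - 1" and bl: "b l' = l' \<or> b l' = l' - 1" unfolding a_def b_def by auto
    have pl: "2 \<le> l" "2 \<le> l'" using Xprop l l' by auto
    have nc: "a l \<noteq> b l' + 1 \<and> b l' \<noteq> a l + 1" using far al bl pl by auto
    have par: "even (b l') \<longleftrightarrow> \<not> even (a l')" using Xprop[OF l'] unfolding a_def b_def by auto
    have "\<not> (odd (a l) \<and> odd (b l'))" using c par by auto
    then have "\<not> G_adj k (a l) (b l')" using nc unfolding G_adj_def by auto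
    then show "M $$ (f l, g l') = 0" using Ment[OF l l'] by simp
  qed
  have "card Y \<le> vec_space.rank (card S) M"
    by (rule rank_lb[OF Mcar finY _ _ diag off]) (use fR gC lenR in auto)
  then have "card Y \<le> r" using assms(3) unfolding biadj_rank_def M_def by simp
  then have "card X \<le> 3 * r" using Y(3) by simp
  moreover have "card (blocks k S) \<le> Suc (card X)" using blocks_card[OF assms(2)] unfolding X_def .
  ultimately show ?thesis by simp
qed

end
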